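(* Let $\mathbf{r}=(r_0,r_1,r_2,\ldots)$ be the regular paperfolding sequence. For every positive integer $k$, the $t$-Hankel determinant $H_k(\mathbf{r},t)$ is a polynomial in $t$ of degree less than or equal to $3$.
   Context: The regular paperfolding sequence $\mathbf{r}$ is defined by the generating function $\sum_{n\ge0}r_nx^n=\sum_{n\ge0}\frac{x^{2^n-1}}{1-x^{2^{n+2}}}$, so $\mathbf{r}=(1,1,0,1,1,0,0,\ldots)$. For a sequence $\mathbf{c}=(c_0,c_1,\ldots)$, a parameter $t$ and $k\ge1$, the $t$-Hankel determinant is $H_k(\mathbf{c},t)=\det(a_{ij})_{0\le i,j\le k-1}$ where $a_{ij}=c_{i+j}$ for $i\ne j$ and $a_{ii}=c_{2i}\,t$ (i.e. the ordinary Hankel determinant with every diagonal entry multiplied by $t$). *)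

theory Defs
  imports "Jordan_Normal_Form.Determinant" "HOL-Computational_Algebra.Polynomial"
begin

text \<open>Regular paperfolding sequence: r n is the coefficient of x^n in
  sum over m of x^(2^m - 1) / (1 - x^(2^(m+2))), i.e. the number of pairs (m, j)
  with n = 2^m - 1 + j * 2^(m+2).\<close>
definition paperfold :: "nat \<Rightarrow> nat" where
  "paperfold n = card {m. 2 ^ m - 1 \<le> n \<and> 2 ^ (m + 2) dvd (n - (2 ^ m - 1))}"

definition t_hankel_matrix :: "(nat \<Rightarrow> int) \<Rightarrow> nat \<Rightarrow> int poly mat" where
  "t_hankel_matrix c k = mat k k (\<lambda>(i, j).
     if i = j then smult (c (2 * i)) [:0, 1:] else [:c (i + j):])"

definition t_hankel :: "(nat \<Rightarrow> int) \<Rightarrow> nat \<Rightarrow> int poly" where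
  "t_hankel c k = det (t_hankel_matrix c k)"

end

theory Submission
  imports Defs
begin

lemma pf_even:
  assumes "even n"
  shows "paperfold n = (if 4 dvd n then 1 else 0)"
proof -
  let ?S = "{m. 2 ^ m - 1 \<le> n \<and> 2 ^ (m + 2) dvd (n - (2 ^ m - 1))}"
  have A: "m = 0" if "m \<in> ?S" for m
  proof (rule ccontr)
    assume "m \<noteq> 0"
    from that have h1: "2 ^ m - 1 \<le> n" and h2: "(2::nat) ^ (m + 2) dvd (n - (2 ^ m - 1))" by auto
    have ev: "even ((2::nat) ^ m)" using \<open>m \<noteq> 0\<close> by simp
    have pos: "(2::nat) ^ m \<ge> 1" by simp
    have gen: "\<And>x::nat. even x \<Longrightarrow> x \<ge> 1 \<Longrightarrow> x - 1 \<le> n \<Longrightarrow> odd (n - (x - 1))"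
      using assms by presburger
    have "odd (n - (2 ^ m - 1))" using gen[OF ev pos h1] .
    moreover have "even ((2::nat) ^ (m + 2))" by simp
    ultimately show False using h2 dvd_trans by blast
  qed
  have B: "0 \<in> ?S \<longleftrightarrow> 4 dvd n" by simp
  have pc: "paperfold n = card ?S" by (simp only: paperfold_def)
  have sub: "?S \<subseteq> {0}" using A by blast
  show ?thesis
  proof (cases "4 dvd n")
    case True
    have e: "?S = {0}" using sub B True by blast
    show ?thesis using True by (simp only: pc e) simp
  next
    case False
    have e: "?S = {}" using sub B False by blast
    show ?thesis using False by (simp only: pc e) simp
  qed
qed

lemma deg_det_bound:
  fixes Q :: "int poly mat"
  assumes Q: "Q \<in> carrier_mat k k"
  and d: "\<And>i j. i<k \<Longrightarrow> j<k \<Longrightarrow> degree (Q$$(i,j)) \<le> (if even i \<and> j = i then 1 else 0)"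
  and z: "\<And>i j. i<k \<Longrightarrow> j<k \<Longrightarrow> odd i \<Longrightarrow> 5 \<le> i \<Longrightarrow> odd j \<Longrightarrow> Q$$(i,j) = 0"
  shows "degree (det Q) \<le> 3"
  unfolding det_def'[OF Q]
proof (rule degree_sum_le)
  show "finite {p. p permutes {0..<k}}" by (simp add: finite_permutations)
  fix p assume "p \<in> {p. p permutes {0..<k}}"
  hence pp: "p permutes {0..<k}" by simp
  let ?pr = "\<Prod> i = 0..<k. Q $$ (i, p i)"
  have sg: "signof p = (1::int poly) \<or> signof p = -1" by (simp add: sign_def)
  have "degree (signof p * ?pr) \<le> degree ?pr"
  proof (rule disjE[OF sg])
    assume h: "signof p = (1::int poly)" show ?thesis by (simp only: h) simp
  next
    assume h: "signof p = (-1::int poly)" show ?thesis by (simp only: h) simp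
  qed
  moreover have "degree ?pr \<le> 3"
  proof (cases "?pr = 0")
    case True thus ?thesis by (simp only: True degree_0)
  next
    case False
    hence nz: "\<And>i. i<k \<Longrightarrow> Q$$(i,p i) \<noteq> 0" by auto
    have pk: "\<And>i. i < k \<Longrightarrow> p i < k" using pp permutes_in_image by fastforce
    have injp: "inj p" using pp permutes_inj by blast
    define F where "F = {i\<in>{0..<k}. even i \<and> p i = i}"
    define B where "B = {i\<in>{0..<k}. odd i \<and> 5 \<le> i}"
    define E where "E = {i\<in>{0..<k}. even i}"
    have "degree ?pr \<le> sum (degree \<circ> (\<lambda>i. Q$$(i,p i))) {0..<k}"
      by (rule degree_prod_sum_le) simp
    also have "\<dots> \<le> sum (\<lambda>i. if i \<in> F then 1 else 0) {0..<k}"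
    proof (rule sum_mono)
      fix i assume "i \<in> {0..<k}"
      thus "(degree \<circ> (\<lambda>i. Q $$ (i, p i))) i \<le> (if i \<in> F then 1 else 0)"
        using d[of i "p i"] pk[of i] by (auto simp: F_def split: if_splits)
    qed
    also have "\<dots> = card F"
      by (simp add: sum.If_cases F_def Int_absorb1 subset_eq) (rule arg_cong[where f=card], auto)
    also have "card F \<le> 3"
    proof -
      have pB: "p ` B \<subseteq> E"
      proof
        fix x assume "x \<in> p ` B"
        then obtain b where b: "b \<in> B" "x = p b" by auto
        have "Q$$(b, p b) \<noteq> 0" using nz b by (auto simp: B_def)
        then have "even (p b)" using z[of b "p b"] b pk[of b] by (auto simp: B_def)
        then show "x \<in> E" using b pk[of b] by (auto simp: E_def B_def)
      qed
      have disj: "F \<inter> p ` B = {}"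
      proof (rule ccontr)
        assume "F \<inter> p ` B \<noteq> {}"
        then obtain i b where i: "i \<in> F" "b \<in> B" "i = p b" by auto
        then have "p i = p b" by (auto simp: F_def)
        then have "i = b" using injp by (auto dest: injD)
        then show False using i by (auto simp: F_def B_def)
      qed
      have FE: "F \<subseteq> E" by (auto simp: F_def E_def)
      have fE: "finite E" by (simp add: E_def)
      have "card F + card (p ` B) = card (F \<union> p ` B)"
        using disj fE FE pB by (intro card_Un_disjoint[symmetric]) (auto intro: finite_subset)
      also have "\<dots> \<le> card E" using FE pB fE by (intro card_mono) auto
      finally have c1: "card F + card (p ` B) \<le> card E" .
      have c2: "card (p ` B) = card B"
        using injp by (intro card_image) (auto intro: inj_on_subset)
      have "E \<subseteq> {0,2,4} \<union> Suc ` B"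
      proof
        fix x assume x: "x \<in> E"
        show "x \<in> {0,2,4} \<union> Suc ` B"
        proof (cases "x \<le> 4")
          case True thus ?thesis using x by (auto simp: E_def)
        next
          case False
          then have "x - 1 \<in> B" "x = Suc (x - 1)" using x by (auto simp: E_def B_def)
          then show ?thesis by blast
        qed
      qed
      then have "card E \<le> card ({0,2,4::nat} \<union> Suc ` B)" by (intro card_mono) (auto simp: B_def)
      also have "\<dots> \<le> card {0,2,4::nat} + card (Suc ` B)" by (rule card_Un_le)
      also have "\<dots> \<le> 3 + card B" using card_image_le[of B Suc] by (auto simp: B_def)
      finally show ?thesis using c1 c2 by linarith
    qed
    finally show ?thesis by simp
  qed
  ultimately show "degree (signof p * ?pr) \<le> 3" by linarith
qed

definition i0 :: "nat \<Rightarrow> nat" where "i0 i = (if i mod 4 = 1 then 1 else 3)"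

definition Pm :: "nat \<Rightarrow> int poly mat" where
  "Pm k = mat k k (\<lambda>(i,j). if i = j then 1 else if odd i \<and> 5 \<le> i \<and> j = i0 i then -1 else 0)"

lemma r_diag: "int (paperfold (2*i)) = (if even i then 1 else 0)"
proof -
  have "(4::nat) dvd 2*i \<longleftrightarrow> even i" by presburger
  then show ?thesis using pf_even[of "2*i"] by simp
qed

lemma r_shift: assumes "odd i" "odd j" "5 \<le> i"
  shows "paperfold (i + j) = paperfold (i0 i + j)"
proof -
  have "(4::nat) dvd (i+j) \<longleftrightarrow> 4 dvd (i0 i + j)" using assms unfolding i0_def by presburger
  moreover have "even (i+j)" "even (i0 i + j)" using assms unfolding i0_def by auto
  ultimately show ?thesis using pf_even[of "i+j"] pf_even[of "i0 i + j"] by simp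
qed

lemma M_entry:
  assumes "i < k" "j < k"
  shows "t_hankel_matrix (\<lambda>n. int (paperfold n)) k $$ (i,j) =
    (if i = j \<and> even i then [:0,1:] else [:int (paperfold (i+j)):])"
  using assms r_diag[of i] by (auto simp: t_hankel_matrix_def mult_2)

lemma det_Pm: "det (Pm k) = 1"
proof -
  have "det (Pm k) = prod_list (diag_mat (Pm k))"
    by (rule det_lower_triangular[of k]) (auto simp: Pm_def i0_def)
  also have "diag_mat (Pm k) = replicate k 1"
    by (rule nth_equalityI) (auto simp: diag_mat_def Pm_def)
  also have "prod_list (replicate k (1::int poly)) = 1" by simp
  finally show ?thesis .
qed

lemma PM_entry:
  fixes M :: "int poly mat"
  assumes M: "M \<in> carrier_mat k k" and i: "i < k" and j: "j < k"
  shows "(Pm k * M) $$ (i,j) = M $$ (i,j) - (if odd i \<and> 5 \<le> i then M $$ (i0 i, j) else 0)"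
proof -
  have i0k: "odd i \<Longrightarrow> 5 \<le> i \<Longrightarrow> i0 i < k \<and> i0 i \<noteq> i" using i by (auto simp: i0_def)
  have "(Pm k * M) $$ (i,j) = (\<Sum>l\<in>{0..<k}. Pm k $$ (i,l) * M $$ (l,j))"
    using M i j by (auto simp: scalar_prod_def Pm_def)
  also have "\<dots> = (\<Sum>l\<in>{0..<k}. (if l = i then M $$ (l,j) else 0)
      - (if odd i \<and> 5 \<le> i \<and> l = i0 i then M $$ (l,j) else 0))"
    by (rule sum.cong) (use i in \<open>auto simp: Pm_def i0_def\<close>)
  also have "\<dots> = M $$ (i,j) - (if odd i \<and> 5 \<le> i then M $$ (i0 i, j) else 0)"
    using i i0k by (simp add: sum_subtractf sum.delta)
  finally show ?thesis .
qed

theorem theorem1p4: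
  fixes k :: nat
  assumes "k \<ge> 1"
  shows "degree (t_hankel (\<lambda>n. int (paperfold n)) k) \<le> 3"
proof -
  let ?M = "t_hankel_matrix (\<lambda>n. int (paperfold n)) k"
  have M: "?M \<in> carrier_mat k k" by (simp add: t_hankel_matrix_def)
  have P: "Pm k \<in> carrier_mat k k" by (simp add: Pm_def)
  have "det (Pm k * ?M) = det ?M" using det_mult[OF P M] det_Pm by simp
  moreover have "degree (det (Pm k * ?M)) \<le> 3"
  proof (rule deg_det_bound)
    show "Pm k * ?M \<in> carrier_mat k k" using P M by simp
  next
    fix i j assume i: "i < k" and j: "j < k"
    have i0: "odd i \<Longrightarrow> 5 \<le> i \<Longrightarrow> i0 i < k \<and> odd (i0 i) \<and> i0 i \<noteq> j \<or> odd j"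
      using i by (auto simp: i0_def)
    show "degree ((Pm k * ?M) $$ (i, j)) \<le> (if even i \<and> j = i then 1 else 0)"
    proof (cases "odd i \<and> 5 \<le> i")
      case True
      then have "i0 i < k" "odd (i0 i)" using i by (auto simp: i0_def)
      then show ?thesis using True i j
        by (simp add: PM_entry[OF M i j] M_entry)
    next
      case False
      then show ?thesis using i j
        by (auto simp: PM_entry[OF M i j] M_entry)
    qed
  next
    fix i j assume i: "i < k" and j: "j < k" and oi: "odd i" and i5: "5 \<le> i" and oj: "odd j"
    then have "i0 i < k" "odd (i0 i)" by (auto simp: i0_def)
    then show "(Pm k * ?M) $$ (i, j) = 0"
      using i j oi i5 oj r_shift[OF oi oj i5]
      by (auto simp: PM_entry[OF M i j] M_entry)
  qed
  ultimately show ?thesis by (simp add: t_hankel_def)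
qed

end
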